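(* Let $Q$ be a quiver and suppose $(kQ,\Delta,\varepsilon,\mathrm{M},\mu,\Phi,\mathcal S,\alpha,\beta)$ is a graded Majid algebra structure on the path coalgebra $kQ$. Then $\mathrm{M}(Q_0\otimes Q_0)\subseteq Q_0$, and $Q_0$ with the binary operation $(g,h)\mapsto gh=\mathrm{M}(g\otimes h)$ is a group $G$ with identity $1$ and inverse $g^{-1}=\mathcal S(g)$. Moreover, writing $M=kQ_1$ and ${}^gM^h$ for the span of arrows with source $h$ and target $g$, for all $f,g,h\in G$ one has $f.\,{}^gM^h={}^{fg}M^{fh}$ and ${}^gM^h.f={}^{gf}M^{hf}$ (where $f.m=\mathrm{M}(f\otimes m)$, $m.f=\mathrm{M}(m\otimes f)$), and for $e,f,g,h\in G$, $m\in{}^gM^h$: $e.(f.m)=\frac{\Phi(e,f,g)}{\Phi(e,f,h)}(ef).m$, $(m.e).f=\frac{\Phi(h,e,f)}{\Phi(g,e,f)}m.(ef)$, $(e.m).f=\frac{\Phi(e,h,f)}{\Phi(e,g,f)}e.(m.f)$. In particular the number of arrows from $x$ to $g^{-1}cgx$ equals the number of arrows from $1$ to $c$, for all $x,g,c\in G$.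
   Context: A Majid algebra (dual quasi-Hopf algebra) over $k$ is a coalgebra $(H,\Delta,\varepsilon)$ (Sweedler notation $\Delta(a)=a_1\otimes a_2$) together with coalgebra maps $\mathrm{M}:H\otimes H\to H$, $a\otimes b\mapsto ab$, and $\mu:k\to H$, $\lambda\mapsto\lambda 1_H$, a convolution-invertible linear map $\Phi:H^{\otimes 3}\to k$ (the reassociator), a coalgebra antimorphism $\mathcal S:H\to H$ and linear maps $\alpha,\beta:H\to k$ such that for all $a,b,c,d\in H$: (i) $a_1(b_1c_1)\Phi(a_2,b_2,c_2)=\Phi(a_1,b_1,c_1)(a_2b_2)c_2$; (ii) $1_Ha=a=a1_H$; (iii) $\Phi(a_1,b_1,c_1d_1)\Phi(a_2b_2,c_2,d_2)=\Phi(b_1,c_1,d_1)\Phi(a_1,b_2c_2,d_2)\Phi(a_2,b_3,c_3)$; (iv) $\Phi(a,1_H,b)=\varepsilon(a)\varepsilon(b)$; (v) $\mathcal S(a_1)\alpha(a_2)a_3=\alpha(a)1_H$ and $a_1\beta(a_2)\mathcal S(a_3)=\beta(a)1_H$; (vi) $\Phi(a_1,\mathcal S(a_3),a_5)\beta(a_2)\alpha(a_4)=\Phi^{-1}(\mathcal S(a_1),a_3,\mathcal S(a_5))\alpha(a_2)\beta(a_4)=\varepsilon(a)$. A quiver $Q=(Q_0,Q_1,s,t)$ has vertex set $Q_0$, arrow set $Q_1$, source and target maps $s,t$. Paths of length $n$ form the set $Q_n$ (vertices are paths of length 0). The path coalgebra $kQ$ has basis all paths, with $\Delta(g)=g\otimes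 g$, $\varepsilon(g)=1$ for vertices and, for $p=a_n\cdots a_1$, $\varepsilon(p)=0$, $\Delta(p)=p\otimes s(a_1)+\sum_{i=1}^{n-1}a_n\cdots a_{i+1}\otimes a_i\cdots a_1+t(a_n)\otimes p$; it is graded by length. A graded Majid algebra structure on $kQ$ is a Majid algebra structure on the coalgebra $kQ$ with $\mathrm{M}(kQ_i\otimes kQ_j)\subseteq kQ_{i+j}$, $1\in kQ_0$, $\mathcal S(kQ_n)\subseteq kQ_n$, and $\Phi,\alpha,\beta$ vanishing whenever some homogeneous argument has positive degree. *)

theory Defs
  imports "HOL-Algebra.Group"
begin

text \<open>A quiver: vertex set = the type 'v (nonempty; any graded Majid algebra
 structure forces Q_0 nonempty anyway), arrow set arr Q, source/target maps.\<close>
record ('v,'a) quiver =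
  arr :: "'a set"
  src :: "'a \<Rightarrow> 'v"
  tgt :: "'a \<Rightarrow> 'v"

text \<open>A path (v, [a1,...,an]) is the path p = an...a1 starting at vertex v;
 (v, []) is the trivial path (vertex) v.\<close>
type_synonym ('v,'a) path = "'v \<times> 'a list"

definition is_path :: "('v,'a,'b) quiver_scheme \<Rightarrow> ('v,'a) path \<Rightarrow> bool" where
  "is_path Q p \<longleftrightarrow> set (snd p) \<subseteq> arr Q \<and>
     (snd p \<noteq> [] \<longrightarrow> src Q (hd (snd p)) = fst p) \<and>
     (\<forall>i. Suc i < length (snd p) \<longrightarrow> src Q (snd p ! Suc i) = tgt Q (snd p ! i))"

definition ptgt :: "('v,'a,'b) quiver_scheme \<Rightarrow> ('v,'a) path \<Rightarrow> 'v" where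
  "ptgt Q p = (if snd p = [] then fst p else tgt Q (last (snd p)))"

definition plen :: "('v,'a) path \<Rightarrow> nat" where
  "plen p = length (snd p)"

text \<open>pprefix i p = a_i...a_1, psuffix i p = a_n...a_{i+1}\<close>
definition pprefix :: "nat \<Rightarrow> ('v,'a) path \<Rightarrow> ('v,'a) path" where
  "pprefix i p = (fst p, take i (snd p))"

definition psuffix :: "('v,'a,'b) quiver_scheme \<Rightarrow> nat \<Rightarrow> ('v,'a) path \<Rightarrow> ('v,'a) path" where
  "psuffix Q i p = (ptgt Q (pprefix i p), drop i (snd p))"

text \<open>Iterated coproduct of a path in Sweedler order: splits Q n p lists the
 terms [p_1, ..., p_n] of Delta^(n-1)(p) = sum p_1 \<otimes> ... \<otimes> p_n.\<close>
fun splits :: "('v,'a,'b) quiver_scheme \<Rightarrow> nat \<Rightarrow> ('v,'a) path \<Rightarrow> ('v,'a) path list list" where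
  "splits Q 0 p = []"
| "splits Q (Suc 0) p = [[p]]"
| "splits Q (Suc (Suc n)) p =
     concat (map (\<lambda>i. map (\<lambda>L. L @ [pprefix i p]) (splits Q (Suc n) (psuffix Q i p)))
                 [0..<Suc (plen p)])"

type_synonym ('v,'a,'k) vec = "('v,'a) path \<Rightarrow> 'k"

definition supp :: "('x \<Rightarrow> 'k::zero) \<Rightarrow> 'x set" where
  "supp x = {p. x p \<noteq> 0}"

definition kQ :: "('v,'a,'b) quiver_scheme \<Rightarrow> ('v,'a,'k::zero) vec set" where
  "kQ Q = {x. finite (supp x) \<and> (\<forall>p\<in>supp x. is_path Q p)}"

definition delta :: "('v,'a) path \<Rightarrow> ('v,'a,'k::{zero,one}) vec" where
  "delta p = (\<lambda>q. if q = p then 1 else 0)"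

definition scal :: "'k::times \<Rightarrow> ('x \<Rightarrow> 'k) \<Rightarrow> ('x \<Rightarrow> 'k)" where
  "scal c x = (\<lambda>r. c * x r)"

definition eps :: "('v,'a) path \<Rightarrow> 'k::{zero,one}" where
  "eps p = (if plen p = 0 then 1 else 0)"

definition epsv :: "('v,'a,'k::comm_ring_1) vec \<Rightarrow> 'k" where
  "epsv x = (\<Sum>p\<in>supp x. x p * eps p)"

text \<open>comultiplication of a vector, as an element of kQ \<otimes> kQ = functions on pairs
 of paths: the coefficient of l \<otimes> r is the coefficient of the concatenation l r.\<close>
definition comul :: "('v,'a,'b) quiver_scheme \<Rightarrow> ('v,'a,'k::zero) vec \<Rightarrow> ('v,'a) path \<times> ('v,'a) path \<Rightarrow> 'k" where
  "comul Q x lr = (if fst (fst lr) = ptgt Q (snd lr)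
                   then x (fst (snd lr), snd (snd lr) @ snd (fst lr)) else 0)"

definition vmult :: "(('v,'a) path \<Rightarrow> ('v,'a) path \<Rightarrow> ('v,'a,'k::comm_ring_1) vec)
   \<Rightarrow> ('v,'a,'k) vec \<Rightarrow> ('v,'a,'k) vec \<Rightarrow> ('v,'a,'k) vec" where
  "vmult M x y = (\<lambda>r. \<Sum>p\<in>supp x. \<Sum>q\<in>supp y. x p * y q * M p q r)"

definition phiv :: "(('v,'a) path \<Rightarrow> ('v,'a) path \<Rightarrow> ('v,'a) path \<Rightarrow> 'k::comm_ring_1)
   \<Rightarrow> ('v,'a,'k) vec \<Rightarrow> ('v,'a,'k) vec \<Rightarrow> ('v,'a,'k) vec \<Rightarrow> 'k" where
  "phiv Phi x y z = (\<Sum>p\<in>supp x. \<Sum>q\<in>supp y. \<Sum>r\<in>supp z. x p * y q * z r * Phi p q r)"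

text \<open>All structure maps are linear, hence given by their values on the basis of paths:
 M p q = M(p \<otimes> q), u = 1_H, Phi, Phiinv (the convolution inverse of Phi),
 S p, alpha p, beta p.  Axioms are stated for basis elements (all are multilinear).\<close>
definition graded_majid ::
  "('v,'a,'b) quiver_scheme
   \<Rightarrow> (('v,'a) path \<Rightarrow> ('v,'a) path \<Rightarrow> ('v,'a,'k::field) vec)
   \<Rightarrow> ('v,'a,'k) vec
   \<Rightarrow> (('v,'a) path \<Rightarrow> ('v,'a) path \<Rightarrow> ('v,'a) path \<Rightarrow> 'k)
   \<Rightarrow> (('v,'a) path \<Rightarrow> ('v,'a) path \<Rightarrow> ('v,'a) path \<Rightarrow> 'k)
   \<Rightarrow> (('v,'a) path \<Rightarrow> ('v,'a,'k) vec)
   \<Rightarrow> (('v,'a) path \<Rightarrow> 'k) \<Rightarrow> (('v,'a) path \<Rightarrow> 'k) \<Rightarrow> bool" where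
  "graded_majid Q M u Phi Phiinv S alpha beta \<longleftrightarrow>
    \<comment> \<open>maps land in kQ\<close>
    u \<in> kQ Q \<and>
    (\<forall>a b. is_path Q a \<longrightarrow> is_path Q b \<longrightarrow> M a b \<in> kQ Q) \<and>
    (\<forall>a. is_path Q a \<longrightarrow> S a \<in> kQ Q) \<and>
    \<comment> \<open>M is a coalgebra map\<close>
    (\<forall>a b. is_path Q a \<longrightarrow> is_path Q b \<longrightarrow>
       (\<forall>l r. comul Q (M a b) (l, r) =
          (\<Sum>A\<leftarrow>splits Q 2 a. \<Sum>B\<leftarrow>splits Q 2 b. M (A!0) (B!0) l * M (A!1) (B!1) r)) \<and>
       epsv (M a b) = eps a * eps b) \<and>
    \<comment> \<open>mu is a coalgebra map\<close>
    (\<forall>l r. comul Q u (l, r) = u l * u r) \<and> epsv u = 1 \<and>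
    \<comment> \<open>S is a coalgebra antimorphism\<close>
    (\<forall>a. is_path Q a \<longrightarrow>
       (\<forall>l r. comul Q (S a) (l, r) = (\<Sum>A\<leftarrow>splits Q 2 a. S (A!1) l * S (A!0) r)) \<and>
       epsv (S a) = eps a) \<and>
    \<comment> \<open>Phiinv is the convolution inverse of Phi\<close>
    (\<forall>a b c. is_path Q a \<longrightarrow> is_path Q b \<longrightarrow> is_path Q c \<longrightarrow>
       (\<Sum>A\<leftarrow>splits Q 2 a. \<Sum>B\<leftarrow>splits Q 2 b. \<Sum>C\<leftarrow>splits Q 2 c.
          Phi (A!0) (B!0) (C!0) * Phiinv (A!1) (B!1) (C!1)) = eps a * eps b * eps c \<and>
       (\<Sum>A\<leftarrow>splits Q 2 a. \<Sum>B\<leftarrow>splits Q 2 b. \<Sum>C\<leftarrow>splits Q 2 c.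
          Phiinv (A!0) (B!0) (C!0) * Phi (A!1) (B!1) (C!1)) = eps a * eps b * eps c) \<and>
    \<comment> \<open>(i) quasi-associativity\<close>
    (\<forall>a b c. is_path Q a \<longrightarrow> is_path Q b \<longrightarrow> is_path Q c \<longrightarrow> (\<forall>r.
       (\<Sum>A\<leftarrow>splits Q 2 a. \<Sum>B\<leftarrow>splits Q 2 b. \<Sum>C\<leftarrow>splits Q 2 c.
          vmult M (delta (A!0)) (M (B!0) (C!0)) r * Phi (A!1) (B!1) (C!1)) =
       (\<Sum>A\<leftarrow>splits Q 2 a. \<Sum>B\<leftarrow>splits Q 2 b. \<Sum>C\<leftarrow>splits Q 2 c.
          Phi (A!0) (B!0) (C!0) * vmult M (M (A!1) (B!1)) (delta (C!1)) r))) \<and>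
    \<comment> \<open>(ii) unit\<close>
    (\<forall>a. is_path Q a \<longrightarrow> vmult M u (delta a) = delta a \<and> vmult M (delta a) u = delta a) \<and>
    \<comment> \<open>(iii) 3-cocycle condition\<close>
    (\<forall>a b c d. is_path Q a \<longrightarrow> is_path Q b \<longrightarrow> is_path Q c \<longrightarrow> is_path Q d \<longrightarrow>
       (\<Sum>A\<leftarrow>splits Q 2 a. \<Sum>B\<leftarrow>splits Q 2 b. \<Sum>C\<leftarrow>splits Q 2 c. \<Sum>D\<leftarrow>splits Q 2 d.
          phiv Phi (delta (A!0)) (delta (B!0)) (M (C!0) (D!0)) *
          phiv Phi (M (A!1) (B!1)) (delta (C!1)) (delta (D!1))) =
       (\<Sum>A\<leftarrow>splits Q 2 a. \<Sum>B\<leftarrow>splits Q 3 b. \<Sum>C\<leftarrow>splits Q 3 c. \<Sum>D\<leftarrow>splits Q 2 d.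
          Phi (B!0) (C!0) (D!0) * phiv Phi (delta (A!0)) (M (B!1) (C!1)) (delta (D!1)) *
          Phi (A!1) (B!2) (C!2))) \<and>
    \<comment> \<open>(iv) normalization\<close>
    (\<forall>a b. is_path Q a \<longrightarrow> is_path Q b \<longrightarrow> phiv Phi (delta a) u (delta b) = eps a * eps b) \<and>
    \<comment> \<open>(v) antipode axioms\<close>
    (\<forall>a. is_path Q a \<longrightarrow> (\<forall>r.
       (\<Sum>A\<leftarrow>splits Q 3 a. alpha (A!1) * vmult M (S (A!0)) (delta (A!2)) r) = alpha a * u r \<and>
       (\<Sum>A\<leftarrow>splits Q 3 a. beta (A!1) * vmult M (delta (A!0)) (S (A!2)) r) = beta a * u r)) \<and>
    \<comment> \<open>(vi)\<close>
    (\<forall>a. is_path Q a \<longrightarrow>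
       (\<Sum>A\<leftarrow>splits Q 5 a. phiv Phi (delta (A!0)) (S (A!2)) (delta (A!4)) * beta (A!1) * alpha (A!3)) = eps a \<and>
       (\<Sum>A\<leftarrow>splits Q 5 a. phiv Phiinv (S (A!0)) (delta (A!2)) (S (A!4)) * alpha (A!1) * beta (A!3)) = eps a) \<and>
    \<comment> \<open>gradedness\<close>
    (\<forall>a b. is_path Q a \<longrightarrow> is_path Q b \<longrightarrow> (\<forall>p\<in>supp (M a b). plen p = plen a + plen b)) \<and>
    (\<forall>p\<in>supp u. plen p = 0) \<and>
    (\<forall>a. is_path Q a \<longrightarrow> (\<forall>p\<in>supp (S a). plen p = plen a)) \<and>
    (\<forall>a b c. 0 < plen a + plen b + plen c \<longrightarrow> Phi a b c = 0) \<and>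
    (\<forall>a. 0 < plen a \<longrightarrow> alpha a = 0 \<and> beta a = 0)"

text \<open>product of vertices g h = M(g \<otimes> h) (meaningful once M(Q_0 \<otimes> Q_0) \<subseteq> Q_0)\<close>
definition vmul :: "(('v,'a) path \<Rightarrow> ('v,'a) path \<Rightarrow> ('v,'a,'k::{zero,one}) vec) \<Rightarrow> 'v \<Rightarrow> 'v \<Rightarrow> 'v" where
  "vmul M g h = (THE x. M (g, []) (h, []) = delta (x, []))"

definition one_v :: "('v,'a,'k::{zero,one}) vec \<Rightarrow> 'v" where
  "one_v u = (THE e. u = delta (e, []))"

definition Vgroup :: "(('v,'a) path \<Rightarrow> ('v,'a) path \<Rightarrow> ('v,'a,'k::{zero,one}) vec) \<Rightarrow> ('v,'a,'k) vec \<Rightarrow> 'v monoid" where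
  "Vgroup M u = \<lparr>carrier = UNIV, mult = vmul M, one = one_v u\<rparr>"

definition arrspan :: "('v,'a,'b) quiver_scheme \<Rightarrow> 'v \<Rightarrow> 'v \<Rightarrow> ('v,'a,'k::zero) vec set" where
  "arrspan Q g h = {x. finite (supp x) \<and>
      (\<forall>p\<in>supp x. \<exists>a\<in>arr Q. src Q a = h \<and> tgt Q a = g \<and> p = (h, [a]))}"

definition lact :: "(('v,'a) path \<Rightarrow> ('v,'a) path \<Rightarrow> ('v,'a,'k::comm_ring_1) vec) \<Rightarrow> 'v \<Rightarrow> ('v,'a,'k) vec \<Rightarrow> ('v,'a,'k) vec" where
  "lact M f m = vmult M (delta (f, [])) m"

definition ract :: "(('v,'a) path \<Rightarrow> ('v,'a) path \<Rightarrow> ('v,'a,'k::comm_ring_1) vec) \<Rightarrow> ('v,'a,'k) vec \<Rightarrow> 'v \<Rightarrow> ('v,'a,'k) vec" where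
  "ract M m f = vmult M m (delta (f, []))"

definition arrows_between :: "('v,'a,'b) quiver_scheme \<Rightarrow> 'v \<Rightarrow> 'v \<Rightarrow> 'a set" where
  "arrows_between Q x y = {a\<in>arr Q. src Q a = x \<and> tgt Q a = y}"

end

theory Submission
  imports Defs "HOL-Library.Function_Algebras" "HOL.Vector_Spaces"
begin

unbundle cardinal_syntax

definition Vs :: "('v,'a) path set \<Rightarrow> ('v,'a,'k::field) vec set" where
  "Vs E = {x. finite (supp x) \<and> supp x \<subseteq> E}"

definition linV :: "(('v,'a,'k::field) vec \<Rightarrow> ('v,'a,'k) vec) \<Rightarrow> ('v,'a) path set \<Rightarrow> bool" where
  "linV T E \<longleftrightarrow> (\<forall>x\<in>Vs E. \<forall>y\<in>Vs E. T (x + y) = T x + T y) \<and>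
                 (\<forall>c. \<forall>x\<in>Vs E. T (scal c x) = scal c (T x))"

lemma sum_fun_apply: "(\<Sum>i\<in>I. f i) r = (\<Sum>i\<in>I. f i r)"
  by (induction I rule: infinite_finite_induct) auto

lemma vs_scal: "vector_space (scal :: 'k::field \<Rightarrow> ('v,'a,'k) vec \<Rightarrow> _)"
  by unfold_locales (auto simp: scal_def fun_eq_iff algebra_simps)

lemma supp_add: "supp (x + y :: ('v,'a,'k::field) vec) \<subseteq> supp x \<union> supp y" by (auto simp: supp_def)
lemma supp_scal: "supp (scal c x :: ('v,'a,'k::field) vec) \<subseteq> supp x" by (auto simp: supp_def scal_def)
lemma supp_delta[simp]: "supp (delta p :: ('v,'a,'k::zero_neq_one) vec) = {p}"
  by (auto simp: supp_def delta_def)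
lemma supp_sum: "supp (\<Sum>i\<in>I. f i :: ('v,'a,'k::field) vec) \<subseteq> (\<Union>i\<in>I. supp (f i))"
  by (auto simp: supp_def sum_fun_apply intro: ccontr dest!: sum.neutral)
lemma scal_zero[simp]: "scal 0 x = (0 :: ('v,'a,'k::field) vec)" by (auto simp: scal_def)

lemma Vs_zero: "(0 :: ('v,'a,'k::field) vec) \<in> Vs E" by (simp add: Vs_def supp_def)
lemma Vs_add: "x \<in> Vs E \<Longrightarrow> y \<in> Vs E \<Longrightarrow> x + y \<in> Vs E"
  unfolding Vs_def using supp_add[of x y] by (auto intro: finite_subset)
lemma Vs_scal: "x \<in> Vs E \<Longrightarrow> scal c x \<in> Vs E"
  unfolding Vs_def using supp_scal[of c x] by (auto intro: finite_subset)
lemma Vs_delta: "p \<in> E \<Longrightarrow> (delta p :: ('v,'a,'k::field) vec) \<in> Vs E"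
  unfolding Vs_def by simp
lemma Vs_sum: "(\<And>i. i\<in>I \<Longrightarrow> f i \<in> Vs E) \<Longrightarrow> sum f I \<in> Vs E"
  by (induction I rule: infinite_finite_induct) (auto intro: Vs_add Vs_zero)

lemma Vs_repr: "finite (supp x) \<Longrightarrow> x = (\<Sum>p\<in>supp x. scal (x p) (delta p :: ('v,'a,'k::field) vec))"
  apply (rule ext)
  apply (simp add: sum_fun_apply scal_def delta_def if_distrib cong: if_cong)
  apply (auto simp: supp_def)
  done

lemma linV_zero: "linV T E \<Longrightarrow> T 0 = (0 :: ('v,'a,'k::field) vec)"
proof -
  assume l: "linV T E"
  have "T (scal 0 0) = scal 0 (T 0)" using l Vs_zero unfolding linV_def by blast
  thus ?thesis by simp
qed

lemma linV_sum: "linV T E \<Longrightarrow> (\<And>i. i\<in>I \<Longrightarrow> f i \<in> Vs E) \<Longrightarrow> T (sum f I) = (\<Sum>i\<in>I. T (f i))"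
proof (induction I rule: infinite_finite_induct)
  case (infinite A)
  have "sum f A = 0" "(\<Sum>i\<in>A. T (f i)) = 0" using infinite by auto
  then show ?case using linV_zero[OF infinite.prems(1)] by (simp only:)
next
  case empty
  have "sum f {} = 0" "(\<Sum>i\<in>{}. T (f i)) = 0" by auto
  then show ?case using linV_zero[OF empty.prems(1)] by (simp only:)
next
  case (insert x F)
  have "T (sum f (insert x F)) = T (f x + sum f F)" by (rule arg_cong[where f=T], rule sum.insert[OF insert.hyps])
  also have "\<dots> = T (f x) + T (sum f F)"
  proof -
    have a: "f x \<in> Vs E" using insert.prems(2) by simp
    have b: "sum f F \<in> Vs E" using insert.prems(2) by (intro Vs_sum) simp
    show ?thesis using insert.prems(1) a b unfolding linV_def by (elim conjE) (erule ballE[where x="f x"], erule ballE[where x="sum f F"], auto)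
  qed
  also have "\<dots> = T (f x) + (\<Sum>i\<in>F. T (f i))"
  proof -
    have ih: "T (sum f F) = (\<Sum>i\<in>F. T (f i))" using insert.prems by (intro insert.IH) auto
    show ?thesis by (simp only: ih)
  qed
  also have "\<dots> = (\<Sum>i\<in>insert x F. T (f i))" by (rule sum.insert[OF insert.hyps, symmetric])
  finally show ?case .
qed

lemma linV_repr:
  assumes "linV T E" "x \<in> Vs E"
  shows "T x = (\<Sum>p\<in>supp x. scal (x p) (T (delta p)))"
proof -
  have "x = (\<Sum>p\<in>supp x. scal (x p) (delta p))"
    using Vs_repr assms(2) unfolding Vs_def by blast
  then have "T x = T (\<Sum>p\<in>supp x. scal (x p) (delta p))" by (rule arg_cong)
  also have "\<dots> = (\<Sum>p\<in>supp x. T (scal (x p) (delta p)))"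
    by (intro linV_sum[OF assms(1)] Vs_scal Vs_delta) (insert assms(2), auto simp: Vs_def)
  also have "\<dots> = (\<Sum>p\<in>supp x. scal (x p) (T (delta p)))"
    using assms by (intro sum.cong refl) (auto simp: Vs_def linV_def intro!: Vs_delta)
  finally show ?thesis .
qed

lemma half1:
  fixes T :: "('v,'a,'k::field) vec \<Rightarrow> ('v,'a,'k) vec"
  assumes bij: "bij_betw T (Vs E1) (Vs E2)" and lin: "linV T E1"
  shows "E2 \<subseteq> (\<Union>a\<in>E1. supp (T (delta a)))"
proof
  fix b assume b: "b \<in> E2"
  then have "delta b \<in> Vs E2" by (rule Vs_delta)
  then obtain m where m: "m \<in> Vs E1" "T m = delta b" using bij unfolding bij_betw_def by (metis imageE)
  have "b \<in> supp (T m)" using m by simp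
  also have "T m = (\<Sum>p\<in>supp m. scal (m p) (T (delta p)))" by (rule linV_repr[OF lin m(1)])
  also have "supp \<dots> \<subseteq> (\<Union>p\<in>supp m. supp (scal (m p) (T (delta p))))" by (rule supp_sum)
  also have "\<dots> \<subseteq> (\<Union>a\<in>E1. supp (T (delta a)))"
    using m(1) supp_scal unfolding Vs_def by blast
  finally show "b \<in> (\<Union>a\<in>E1. supp (T (delta a)))" .
qed

lemma half2:
  fixes T :: "('v,'a,'k::field) vec \<Rightarrow> ('v,'a,'k) vec"
  assumes bij: "bij_betw T (Vs E1) (Vs E2)" and lin: "linV T E1" and fin: "finite E2"
  shows "finite E1 \<and> card E1 \<le> card E2"
proof -
  interpret V: vector_space "scal :: 'k \<Rightarrow> ('v,'a,'k) vec \<Rightarrow> _" by (rule vs_scal)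
  let ?D = "(\<lambda>a. T (delta a)) ` E1"
  have inj: "inj_on (\<lambda>a. T (delta a)) E1"
  proof (rule inj_onI)
    fix a b assume "a \<in> E1" "b \<in> E1" "T (delta a) = T (delta b)"
    then have "delta a = (delta b :: ('v,'a,'k) vec)"
      using bij Vs_delta unfolding bij_betw_def inj_on_def by metis
    then show "a = b" unfolding delta_def by (metis one_neq_zero)
  qed
  have sp: "?D \<subseteq> V.span (delta ` E2)"
  proof
    fix y assume "y \<in> ?D"
    then have y: "y \<in> Vs E2" using bij Vs_delta unfolding bij_betw_def by blast
    then have "y = (\<Sum>p\<in>supp y. scal (y p) (delta p))" using Vs_repr unfolding Vs_def by blast
    also have "\<dots> \<in> V.span (delta ` E2)"
      using y unfolding Vs_def by (intro V.span_sum V.span_scale V.span_base) auto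
    finally show "y \<in> V.span (delta ` E2)" .
  qed
  have ind: "V.independent ?D"
    unfolding V.independent_explicit_finite_subsets
  proof (intro allI impI ballI)
    fix S u v assume S: "S \<subseteq> ?D" "finite S" and su: "(\<Sum>v\<in>S. scal (u v) v) = 0" and v: "v \<in> S"
    define E' where "E' = {a\<in>E1. T (delta a) \<in> S}"
    have SE: "S = (\<lambda>a. T (delta a)) ` E'" using S unfolding E'_def by auto
    have inj': "inj_on (\<lambda>a. T (delta a)) E'" using inj unfolding E'_def by (auto intro: inj_on_subset)
    have fE: "finite E'" using S(2) SE inj' finite_imageD by metis
    have E'1: "E' \<subseteq> E1" unfolding E'_def by auto
    define w where "w = (\<Sum>a\<in>E'. scal (u (T (delta a))) (delta a :: ('v,'a,'k) vec))"
    have wV: "w \<in> Vs E1" unfolding w_def using E'1 by (auto intro!: Vs_sum Vs_scal Vs_delta)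
    have "T w = (\<Sum>a\<in>E'. T (scal (u (T (delta a))) (delta a)))"
      unfolding w_def using E'1 by (intro linV_sum[OF lin]) (auto intro!: Vs_scal Vs_delta)
    also have "\<dots> = (\<Sum>a\<in>E'. scal (u (T (delta a))) (T (delta a)))"
    proof (intro sum.cong refl)
      fix a assume "a \<in> E'"
      then have "delta a \<in> Vs E1" using E'1 by (intro Vs_delta) auto
      then show "T (scal (u (T (delta a))) (delta a)) = scal (u (T (delta a))) (T (delta a))"
        using lin unfolding linV_def by blast
    qed
    also have "\<dots> = (\<Sum>v\<in>S. scal (u v) v)" unfolding SE by (rule sum.reindex[OF inj', symmetric, unfolded comp_def])
    also have "\<dots> = T 0" using su linV_zero[OF lin] by simp
    finally have "w = 0" using bij wV Vs_zero unfolding bij_betw_def inj_on_def by blast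
    obtain a where a: "a \<in> E'" "v = T (delta a)" using v SE by auto
    have "w a = u v"
      unfolding w_def using a fE
      by (simp add: sum_fun_apply scal_def delta_def if_distrib cong: if_cong)
    then show "u v = 0" using \<open>w = 0\<close> by simp
  qed
  have "finite ?D \<and> card ?D \<le> card ((delta :: _ \<Rightarrow> ('v,'a,'k) vec) ` E2)"
    using V.independent_span_bound[OF _ ind sp] fin by auto
  moreover have "card ((delta :: _ \<Rightarrow> ('v,'a,'k) vec) ` E2) \<le> card E2" using fin by (rule card_image_le)
  ultimately show ?thesis using inj card_image[OF inj] finite_imageD[OF _ inj] by linarith
qed

lemma linV_inv:
  fixes T :: "('v,'a,'k::field) vec \<Rightarrow> ('v,'a,'k) vec"
  assumes bij: "bij_betw T (Vs E1) (Vs E2)" and lin: "linV T E1"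
  shows "linV (the_inv_into (Vs E1) T) E2"
proof -
  let ?S = "the_inv_into (Vs E1) T"
  have inj: "inj_on T (Vs E1)" using bij by (simp add: bij_betw_def)
  have S1: "?S y \<in> Vs E1" and S2: "T (?S y) = y" if "y \<in> Vs E2" for y
    using that bij bij_betw_the_inv_into[OF bij] f_the_inv_into_f_bij_betw[OF bij]
    unfolding bij_betw_def by auto
  show ?thesis unfolding linV_def
  proof (intro conjI ballI allI)
    fix x y :: "('v,'a,'k) vec" assume xy: "x \<in> Vs E2" "y \<in> Vs E2"
    have "T (?S x + ?S y) = x + y" using lin S1 S2 xy unfolding linV_def by auto
    then show "?S (x + y) = ?S x + ?S y"
      using the_inv_into_f_eq[OF inj] S1 xy Vs_add by blast
  next
    fix c :: 'k and x :: "('v,'a,'k) vec" assume x: "x \<in> Vs E2"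
    have "T (scal c (?S x)) = scal c x" using lin S1 S2 x unfolding linV_def by auto
    then show "?S (scal c x) = scal c (?S x)"
      using the_inv_into_f_eq[OF inj] S1 x Vs_scal by blast
  qed
qed

lemma card_le_inf:
  assumes "E2 \<subseteq> (\<Union>a\<in>E1. F a)" "\<And>a. a \<in> E1 \<Longrightarrow> finite (F a)" "infinite E1"
  shows "|E2| \<le>o |E1|"
proof -
  have "|\<Union>a\<in>E1. F a| \<le>o |E1|"
  proof (rule card_of_UNION_ordLeq_infinite[OF assms(3)])
    show "|E1| \<le>o |E1|" by (rule ordLeq_refl[OF card_of_Card_order])
    show "\<forall>i\<in>E1. |F i| \<le>o |E1|"
    proof
      fix i assume "i \<in> E1"
      then have "finite (F i)" by (rule assms(2))
      then have "|F i| <o |E1|"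
        using finite_ordLess_infinite[OF card_of_Well_order card_of_Well_order] assms(3)
        unfolding Field_card_of by blast
      then show "|F i| \<le>o |E1|" by (rule ordLess_imp_ordLeq)
    qed
  qed
  thus ?thesis using card_of_mono1[OF assms(1)] ordLeq_transitive by blast
qed

lemma lin_bij_card:
  fixes T :: "('v,'a,'k::field) vec \<Rightarrow> ('v,'a,'k) vec"
  assumes bij: "bij_betw T (Vs E1) (Vs E2)" and lin: "linV T E1"
  shows "\<exists>\<phi>. bij_betw \<phi> E1 E2"
proof -
  let ?S = "the_inv_into (Vs E1) T"
  have bS: "bij_betw ?S (Vs E2) (Vs E1)" using bij by (rule bij_betw_the_inv_into)
  have lS: "linV ?S E2" using bij lin by (rule linV_inv)
  have c1: "E2 \<subseteq> (\<Union>a\<in>E1. supp (T (delta a)))" using bij lin by (rule half1)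
  have c2: "E1 \<subseteq> (\<Union>a\<in>E2. supp (?S (delta a)))" using bS lS by (rule half1)
  have f1: "finite (supp (T (delta a)))" if "a \<in> E1" for a
    using bij Vs_delta[OF that] unfolding bij_betw_def Vs_def by blast
  have f2: "finite (supp (?S (delta a)))" if "a \<in> E2" for a
    using bS Vs_delta[OF that] unfolding bij_betw_def Vs_def by blast
  show ?thesis
  proof (cases "finite E1")
    case True
    then have "finite E2" using f1 by (intro finite_subset[OF c1]) auto
    then have "card E1 = card E2" using half2[OF bij lin] half2[OF bS lS] True by auto
    then show ?thesis using True \<open>finite E2\<close> finite_same_card_bij by blast
  next
    case False
    have "infinite E2"
    proof
      assume "finite E2"
      then have "finite E1" using f2 by (intro finite_subset[OF c2]) auto
      then show False using False by simp
    qed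
    have "|E2| \<le>o |E1|" using card_le_inf[OF c1 f1 False] by blast
    moreover have "|E1| \<le>o |E2|" using card_le_inf[OF c2 f2 \<open>infinite E2\<close>] by blast
    ultimately have "|E1| =o |E2|" by (simp only: ordIso_iff_ordLeq)
    then show ?thesis by (simp only: card_of_ordIso)
  qed
qed



declare splits.simps(3)[simp del]

lemma splits_vertex:
  fixes Q :: "('v,'a,'b) quiver_scheme" and g :: 'v
  shows "splits Q (Suc n) (g,[]) = [replicate (Suc n) (g,[])]"
proof (induction n)
  case 0 thus ?case by (simp only: splits.simps(2) replicate.simps) 
next
  case (Suc n)
  have e: "plen (g,[]::'a list) = 0" "psuffix Q 0 (g,[]::'a list) = (g,[])" "pprefix 0 (g,[]::'a list) = (g,[])"
    by (simp_all add: plen_def pprefix_def psuffix_def ptgt_def)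
  have "splits Q (Suc (Suc n)) (g,[]) = concat (map (\<lambda>i. map (\<lambda>L. L @ [pprefix i (g,[])])
      (splits Q (Suc n) (psuffix Q i (g,[])))) [0..<Suc (plen (g,[]::'a list))])" by (simp only: splits.simps)
  also have "\<dots> = map (\<lambda>L. L @ [(g,[])]) (splits Q (Suc n) (g,[]))" by (simp add: e)
  also have "\<dots> = [replicate (Suc (Suc n)) (g,[])]" by (simp add: Suc.IH replicate_append_same)
  finally show ?case .
qed

lemma splits2_vertex: "splits Q 2 (g,[]) = [[(g,[]),(g,[])]]"
  by (subst numeral_2_eq_2, subst splits_vertex) simp
lemma splits3_vertex: "splits Q 3 (g,[]) = [[(g,[]),(g,[]),(g,[])]]"
  by (subst numeral_3_eq_3, subst splits_vertex) (simp add: numeral_3_eq_3)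
lemma five: "(5::nat) = Suc 4" by simp
lemma splits5_vertex: "splits Q 5 (g,[]) = [[(g,[]),(g,[]),(g,[]),(g,[]),(g,[])]]"
  by (subst five, subst splits_vertex) (simp add: eval_nat_numeral)

lemma splits2_arrow:
  fixes Q :: "('v,'a,'b) quiver_scheme"
  shows "splits Q 2 (h,[a]) = [[(h,[a]),(h,[])], [(tgt Q a,[]),(h,[a])]]"
  by (simp add: numeral_2_eq_2 splits.simps plen_def pprefix_def psuffix_def ptgt_def upt_rec)

lemma delta_inj: "(delta p :: ('v,'a,'k::field) vec) = delta q \<Longrightarrow> p = q"
  unfolding delta_def by (metis one_neq_zero)

lemma is_path_vertex[simp]: "is_path Q (g,[])" by (simp add: is_path_def)
lemma is_path_arrow: "a \<in> arr Q \<Longrightarrow> is_path Q (src Q a,[a])" by (simp add: is_path_def)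

lemma grouplike:
  fixes x :: "('v,'a,'k::field) vec"
  assumes fin: "finite (supp x)" and co: "\<forall>l r. comul Q x (l,r) = x l * x r"
    and ep: "epsv x = 1" and deg: "\<forall>p\<in>supp x. plen p = 0"
  shows "\<exists>v. x = delta (v,[])"
proof -
  have vx: "p = (fst p, [])" if "p \<in> supp x" for p
    using deg that by (cases p) (auto simp: plen_def)
  have one: "x p = 1" if p: "p \<in> supp x" for p
  proof -
    obtain v where "p = (v,[])" using vx[OF p] by blast
    then have "comul Q x (p,p) = x p" by (simp add: comul_def ptgt_def)
    then have "x p * x p = x p" using co by simp
    moreover have "x p \<noteq> 0" using p by (simp add: supp_def)
    ultimately show ?thesis by (metis mult_cancel_right2)
  qed
  have uniq: "p = q" if p: "p \<in> supp x" and q: "q \<in> supp x" for p q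
  proof (rule ccontr)
    assume ne: "p \<noteq> q"
    obtain v w where "p = (v,[])" "q = (w,[])" using vx[OF p] vx[OF q] by blast
    then have "comul Q x (p,q) = 0" using ne by (auto simp: comul_def ptgt_def)
    then show False using co one[OF p] one[OF q] by simp
  qed
  have "supp x \<noteq> {}" using ep by (auto simp: epsv_def)
  then obtain p where p: "p \<in> supp x" by blast
  have "x = delta (fst p, [])"
  proof
    fix r show "x r = delta (fst p, []) r"
    proof (cases "r \<in> supp x")
      case True
      then have "r = p" using uniq[OF _ p] by blast
      then show ?thesis using one[OF p] vx[OF p] by (simp add: delta_def)
    next
      case False
      then have "r \<noteq> p" using p by blast
      then have "r \<noteq> (fst p, [])" using vx[OF p] by simp
      then show ?thesis using False by (simp add: delta_def supp_def)
    qed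
  qed
  then show ?thesis by blast
qed

lemma arrowlike:
  fixes x :: "('v,'a,'k::field) vec"
  assumes kq: "x \<in> kQ Q"
    and co: "\<forall>l r. comul Q x (l,r) = x l * delta (s,[]) r + delta (t,[]) l * x r"
    and deg: "\<forall>p\<in>supp x. plen p = 1"
  shows "x \<in> arrspan Q t s"
  unfolding arrspan_def
proof (intro CollectI conjI ballI)
  show "finite (supp x)" using kq by (simp add: kQ_def)
  fix p assume p: "p \<in> supp x"
  then have pa: "is_path Q p" using kq by (simp add: kQ_def)
  obtain v b where pe: "p = (v,[b])" using deg p by (cases p) (auto simp: plen_def length_Suc_conv)
  have b: "b \<in> arr Q" "src Q b = v" using pa pe by (auto simp: is_path_def)
  have nz: "x p \<noteq> 0" using p by (simp add: supp_def)
  have "comul Q x ((v,[b]),(v,[])) = x p" using pe by (simp add: comul_def ptgt_def)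
  then have "x p = x p * delta (s,[]) (v,[])" using co pe by (simp add: delta_def)
  then have vs: "v = s" using nz by (auto simp: delta_def split: if_splits)
  have "comul Q x ((tgt Q b,[]),(v,[b])) = x p" using pe by (simp add: comul_def ptgt_def)
  then have "x p = delta (t,[]) (tgt Q b,[]) * x p" using co pe by (simp add: delta_def)
  then have "tgt Q b = t" using nz by (auto simp: delta_def split: if_splits)
  then show "\<exists>a\<in>arr Q. src Q a = s \<and> tgt Q a = t \<and> p = (s, [a])" using b vs pe by blast
qed



lemma delta_same[simp]: "delta p p = 1" by (simp add: delta_def)

definition Lf :: "('x \<Rightarrow> 'k::comm_ring_1) \<Rightarrow> ('x \<Rightarrow> 'k) \<Rightarrow> 'k" where
  "Lf F y = (\<Sum>q\<in>supp y. y q * F q)"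

lemma Lf_superset: "finite U \<Longrightarrow> supp y \<subseteq> U \<Longrightarrow> Lf F y = (\<Sum>q\<in>U. y q * F q)"
  unfolding Lf_def by (rule sum.mono_neutral_left) (auto simp: supp_def)

lemma Lf_add:
  fixes x y :: "('v,'a,'k::field) vec"
  assumes "finite (supp x)" "finite (supp y)"
  shows "Lf F (x + y) = Lf F x + Lf F y"
proof -
  let ?U = "supp x \<union> supp y"
  have "Lf F (x + y) = (\<Sum>q\<in>?U. (x + y) q * F q)"
    using assms supp_add[of x y] by (intro Lf_superset) auto
  also have "\<dots> = (\<Sum>q\<in>?U. x q * F q) + (\<Sum>q\<in>?U. y q * F q)"
    by (simp add: distrib_right sum.distrib)
  also have "\<dots> = Lf F x + Lf F y"
    using assms by (simp add: Lf_superset[of ?U x F] Lf_superset[of ?U y F])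
  finally show ?thesis .
qed

lemma Lf_scal:
  fixes x :: "('v,'a,'k::field) vec"
  assumes "finite (supp x)"
  shows "Lf F (scal c x) = c * Lf F x"
proof -
  have "Lf F (scal c x) = (\<Sum>q\<in>supp x. scal c x q * F q)"
    using assms supp_scal[of c x] by (intro Lf_superset) auto
  also have "\<dots> = c * Lf F x" by (simp add: Lf_def scal_def sum_distrib_left mult.assoc)
  finally show ?thesis .
qed

lemma lact_Lf: "lact M f x = (\<lambda>r. Lf (\<lambda>q. M (f,[]) q r) x)"
  by (simp add: lact_def vmult_def Lf_def fun_eq_iff)
lemma ract_Lf: "ract M x f = (\<lambda>r. Lf (\<lambda>q. M q (f,[]) r) x)"
  by (simp add: ract_def vmult_def Lf_def fun_eq_iff)

lemma lin_lact: "linV (lact M f) E"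
  unfolding linV_def lact_Lf
  by (intro conjI ballI allI; rule ext) (auto simp: Lf_add Vs_def, subst Lf_scal, auto simp: Vs_def scal_def)
lemma lin_ract: "linV (\<lambda>x. ract M x f) E"
  unfolding linV_def ract_Lf
  by (intro conjI ballI allI; rule ext) (auto simp: Lf_add Vs_def, subst Lf_scal, auto simp: Vs_def scal_def)

lemma vmult_delta: "vmult M (delta p) (delta q :: ('v,'a,'k::field) vec) = M p q"
  by (simp add: vmult_def fun_eq_iff)
lemma lact_delta: "lact M f (delta p :: ('v,'a,'k::field) vec) = M (f,[]) p"
  by (simp add: lact_def vmult_delta)
lemma ract_delta: "ract M (delta p :: ('v,'a,'k::field) vec) f = M p (f,[])"
  by (simp add: ract_def vmult_delta)

lemma Vs_mono: "E \<subseteq> E' \<Longrightarrow> Vs E \<subseteq> Vs E'" by (auto simp: Vs_def)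

lemma linV_comp:
  fixes T1 T2 :: "('v,'a,'k::field) vec \<Rightarrow> ('v,'a,'k) vec"
  assumes "linV T1 E2" "linV T2 E1" "T2 ` Vs E1 \<subseteq> Vs E2"
  shows "linV (\<lambda>x. T1 (T2 x)) E1"
  unfolding linV_def
proof (intro conjI ballI allI)
  fix x y :: "('v,'a,'k) vec" assume xy: "x \<in> Vs E1" "y \<in> Vs E1"
  then have "T2 x \<in> Vs E2" "T2 y \<in> Vs E2" using assms(3) by auto
  then show "T1 (T2 (x + y)) = T1 (T2 x) + T1 (T2 y)" using assms(1,2) xy unfolding linV_def by simp
next
  fix c :: 'k and x :: "('v,'a,'k) vec" assume x: "x \<in> Vs E1"
  then have "T2 x \<in> Vs E2" using assms(3) by auto
  then show "T1 (T2 (scal c x)) = scal c (T1 (T2 x))" using assms(1,2) x unfolding linV_def by simp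
qed

lemma scal_sum: "scal c (sum f I) = (\<Sum>i\<in>I. scal c (f i :: ('v,'a,'k::field) vec))"
  by (simp add: fun_eq_iff sum_fun_apply scal_def sum_distrib_left)

lemma scal_scal: "scal a (scal b x) = scal (a * b) (x :: ('v,'a,'k::field) vec)"
  by (simp add: fun_eq_iff scal_def mult.assoc)

lemma scal_cancel: "c \<noteq> 0 \<Longrightarrow> scal c x = scal c y \<Longrightarrow> x = (y :: ('v,'a,'k::field) vec)"
  by (simp add: fun_eq_iff scal_def)

lemma scal_one[simp]: "scal 1 x = (x :: ('v,'a,'k::field) vec)"
  by (simp add: fun_eq_iff scal_def)

lemma linV_agree:
  fixes T1 T2 :: "('v,'a,'k::field) vec \<Rightarrow> ('v,'a,'k) vec"
  assumes l1: "linV T1 E" and l2: "linV T2 E" and ag: "\<forall>p\<in>E. T1 (delta p) = scal c (T2 (delta p))"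
    and x: "x \<in> Vs E"
  shows "T1 x = scal c (T2 x)"
proof -
  have "T1 x = (\<Sum>p\<in>supp x. scal (x p) (T1 (delta p)))" by (rule linV_repr[OF l1 x])
  also have "\<dots> = (\<Sum>p\<in>supp x. scal c (scal (x p) (T2 (delta p))))"
    using ag x by (intro sum.cong refl) (auto simp: Vs_def scal_scal mult.commute)
  also have "\<dots> = scal c (T2 x)" by (simp add: linV_repr[OF l2 x] scal_sum)
  finally show ?thesis .
qed

definition Earr :: "('v,'a,'b) quiver_scheme \<Rightarrow> 'v \<Rightarrow> 'v \<Rightarrow> ('v,'a) path set" where
  "Earr Q g h = {p. \<exists>a\<in>arr Q. src Q a = h \<and> tgt Q a = g \<and> p = (h,[a])}"

lemma arrspan_Vs: "arrspan Q g h = Vs (Earr Q g h)"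
  by (auto simp: arrspan_def Vs_def Earr_def)

lemma kQ_Vs: "kQ Q = Vs {p. is_path Q p}"
  by (auto simp: kQ_def Vs_def)

lemma Earr_path: "p \<in> Earr Q g h \<Longrightarrow> is_path Q p"
  by (auto simp: Earr_def is_path_def)

lemma arrows_Earr: "bij_betw (\<lambda>a. (h,[a])) (arrows_between Q h g) (Earr Q g h)"
  by (auto simp: bij_betw_def inj_on_def Earr_def arrows_between_def)

lemma arr_bij:
  fixes T :: "('v,'a,'k::field) vec \<Rightarrow> ('v,'a,'k) vec"
  assumes "bij_betw T (arrspan Q g h) (arrspan Q g' h')" "linV T (Earr Q g h)"
  shows "\<exists>\<phi>. bij_betw \<phi> (arrows_between Q h g) (arrows_between Q h' g')"
proof -
  obtain \<psi> where \<psi>: "bij_betw \<psi> (Earr Q g h) (Earr Q g' h')"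
    using lin_bij_card assms unfolding arrspan_Vs by blast
  have "bij_betw (\<psi> \<circ> (\<lambda>a. (h,[a]))) (arrows_between Q h g) (Earr Q g' h')"
    using arrows_Earr \<psi> by (rule bij_betw_trans)
  then have "bij_betw (inv_into (arrows_between Q h' g') (\<lambda>a. (h',[a])) \<circ> (\<psi> \<circ> (\<lambda>a. (h,[a]))))
     (arrows_between Q h g) (arrows_between Q h' g')"
    using bij_betw_inv_into[OF arrows_Earr] by (rule bij_betw_trans)
  then show ?thesis by blast
qed



locale gm =
  fixes Q :: "('v,'a,'b) quiver_scheme"
    and M :: "('v,'a) path \<Rightarrow> ('v,'a) path \<Rightarrow> ('v,'a,'k::field) vec"
    and u :: "('v,'a,'k) vec"
    and Phi Phiinv :: "('v,'a) path \<Rightarrow> ('v,'a) path \<Rightarrow> ('v,'a) path \<Rightarrow> 'k"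
    and S :: "('v,'a) path \<Rightarrow> ('v,'a,'k) vec"
    and alpha beta :: "('v,'a) path \<Rightarrow> 'k"
  assumes GM: "graded_majid Q M u Phi Phiinv S alpha beta"
begin

lemma C1: "u \<in> kQ Q"
  using GM unfolding graded_majid_def by (elim conjE) assumption
lemma C2: "(\<forall>a b. is_path Q a \<longrightarrow> is_path Q b \<longrightarrow> M a b \<in> kQ Q)"
  using GM unfolding graded_majid_def by (elim conjE) assumption
lemma C3: "(\<forall>a. is_path Q a \<longrightarrow> S a \<in> kQ Q)"
  using GM unfolding graded_majid_def by (elim conjE) assumption
lemma C4: "(\<forall>a b. is_path Q a \<longrightarrow> is_path Q b \<longrightarrow>
       (\<forall>l r. comul Q (M a b) (l, r) =
          (\<Sum>A\<leftarrow>splits Q 2 a. \<Sum>B\<leftarrow>splits Q 2 b. M (A!0) (B!0) l * M (A!1) (B!1) r)) \<and>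
       epsv (M a b) = eps a * eps b)"
  using GM unfolding graded_majid_def by (elim conjE) assumption
lemma C5: "(\<forall>l r. comul Q u (l, r) = u l * u r)"
  using GM unfolding graded_majid_def by (elim conjE) assumption
lemma C6: "epsv u = 1"
  using GM unfolding graded_majid_def by (elim conjE) assumption
lemma C7: "(\<forall>a. is_path Q a \<longrightarrow>
       (\<forall>l r. comul Q (S a) (l, r) = (\<Sum>A\<leftarrow>splits Q 2 a. S (A!1) l * S (A!0) r)) \<and>
       epsv (S a) = eps a)"
  using GM unfolding graded_majid_def by (elim conjE) assumption
lemma C8: "(\<forall>a b c. is_path Q a \<longrightarrow> is_path Q b \<longrightarrow> is_path Q c \<longrightarrow>
       (\<Sum>A\<leftarrow>splits Q 2 a. \<Sum>B\<leftarrow>splits Q 2 b. \<Sum>C\<leftarrow>splits Q 2 c.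
          Phi (A!0) (B!0) (C!0) * Phiinv (A!1) (B!1) (C!1)) = eps a * eps b * eps c \<and>
       (\<Sum>A\<leftarrow>splits Q 2 a. \<Sum>B\<leftarrow>splits Q 2 b. \<Sum>C\<leftarrow>splits Q 2 c.
          Phiinv (A!0) (B!0) (C!0) * Phi (A!1) (B!1) (C!1)) = eps a * eps b * eps c)"
  using GM unfolding graded_majid_def by (elim conjE) assumption
lemma C9: "(\<forall>a b c. is_path Q a \<longrightarrow> is_path Q b \<longrightarrow> is_path Q c \<longrightarrow> (\<forall>r.
       (\<Sum>A\<leftarrow>splits Q 2 a. \<Sum>B\<leftarrow>splits Q 2 b. \<Sum>C\<leftarrow>splits Q 2 c.
          vmult M (delta (A!0)) (M (B!0) (C!0)) r * Phi (A!1) (B!1) (C!1)) =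
       (\<Sum>A\<leftarrow>splits Q 2 a. \<Sum>B\<leftarrow>splits Q 2 b. \<Sum>C\<leftarrow>splits Q 2 c.
          Phi (A!0) (B!0) (C!0) * vmult M (M (A!1) (B!1)) (delta (C!1)) r)))"
  using GM unfolding graded_majid_def by (elim conjE) assumption
lemma C10: "(\<forall>a. is_path Q a \<longrightarrow> vmult M u (delta a) = delta a \<and> vmult M (delta a) u = delta a)"
  using GM unfolding graded_majid_def by (elim conjE) assumption
lemma C11: "(\<forall>a. is_path Q a \<longrightarrow> (\<forall>r.
       (\<Sum>A\<leftarrow>splits Q 3 a. alpha (A!1) * vmult M (S (A!0)) (delta (A!2)) r) = alpha a * u r \<and>
       (\<Sum>A\<leftarrow>splits Q 3 a. beta (A!1) * vmult M (delta (A!0)) (S (A!2)) r) = beta a * u r))"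
  using GM unfolding graded_majid_def by (elim conjE) assumption
lemma C12: "(\<forall>a. is_path Q a \<longrightarrow>
       (\<Sum>A\<leftarrow>splits Q 5 a. phiv Phi (delta (A!0)) (S (A!2)) (delta (A!4)) * beta (A!1) * alpha (A!3)) = eps a \<and>
       (\<Sum>A\<leftarrow>splits Q 5 a. phiv Phiinv (S (A!0)) (delta (A!2)) (S (A!4)) * alpha (A!1) * beta (A!3)) = eps a)"
  using GM unfolding graded_majid_def by (elim conjE) assumption
lemma C13: "(\<forall>a b. is_path Q a \<longrightarrow> is_path Q b \<longrightarrow> (\<forall>p\<in>supp (M a b). plen p = plen a + plen b))"
  using GM unfolding graded_majid_def by (elim conjE) assumption
lemma C14: "(\<forall>p\<in>supp u. plen p = 0)"
  using GM unfolding graded_majid_def by (elim conjE) assumption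
lemma C15: "(\<forall>a. is_path Q a \<longrightarrow> (\<forall>p\<in>supp (S a). plen p = plen a))"
  using GM unfolding graded_majid_def by (elim conjE) assumption
lemma C16: "(\<forall>a b c. 0 < plen a + plen b + plen c \<longrightarrow> Phi a b c = 0)"
  using GM unfolding graded_majid_def by (elim conjE) assumption
lemmas C = C1 C2 C3 C4 C5 C6 C7 C8 C9 C10 C11 C12 C13 C14 C15 C16


lemma ax_u: "u \<in> kQ Q" by (rule C(1))
lemma ax_M: "is_path Q a \<Longrightarrow> is_path Q b \<Longrightarrow> M a b \<in> kQ Q"
  using C(2) by blast
lemma ax_Mco: "is_path Q a \<Longrightarrow> is_path Q b \<Longrightarrow> comul Q (M a b) (l, r) =
          (\<Sum>A\<leftarrow>splits Q 2 a. \<Sum>B\<leftarrow>splits Q 2 b. M (A!0) (B!0) l * M (A!1) (B!1) r)"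
  using C(4) by blast
lemma ax_Meps: "is_path Q a \<Longrightarrow> is_path Q b \<Longrightarrow> epsv (M a b) = eps a * eps b"
  using C(4) by blast
lemma ax_uco: "comul Q u (l, r) = u l * u r"
  using C(5) by blast
lemma ax_ueps: "epsv u = 1" by (rule C(6))
lemma ax_S: "is_path Q a \<Longrightarrow> S a \<in> kQ Q"
  using C(3) by blast
lemma ax_Sco: "is_path Q a \<Longrightarrow> comul Q (S a) (l, r) = (\<Sum>A\<leftarrow>splits Q 2 a. S (A!1) l * S (A!0) r)"
  using C(7) by blast
lemma ax_Seps: "is_path Q a \<Longrightarrow> epsv (S a) = eps a"
  using C(7) by blast
lemma ax_Phiinv: "is_path Q a \<Longrightarrow> is_path Q b \<Longrightarrow> is_path Q c \<Longrightarrow>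
       (\<Sum>A\<leftarrow>splits Q 2 a. \<Sum>B\<leftarrow>splits Q 2 b. \<Sum>C\<leftarrow>splits Q 2 c.
          Phi (A!0) (B!0) (C!0) * Phiinv (A!1) (B!1) (C!1)) = eps a * eps b * eps c"
  using C(8) by blast
lemma ax_i: "is_path Q a \<Longrightarrow> is_path Q b \<Longrightarrow> is_path Q c \<Longrightarrow>
       (\<Sum>A\<leftarrow>splits Q 2 a. \<Sum>B\<leftarrow>splits Q 2 b. \<Sum>C\<leftarrow>splits Q 2 c.
          vmult M (delta (A!0)) (M (B!0) (C!0)) r * Phi (A!1) (B!1) (C!1)) =
       (\<Sum>A\<leftarrow>splits Q 2 a. \<Sum>B\<leftarrow>splits Q 2 b. \<Sum>C\<leftarrow>splits Q 2 c.
          Phi (A!0) (B!0) (C!0) * vmult M (M (A!1) (B!1)) (delta (C!1)) r)"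
  using C(9) by blast
lemma ax_ii: "is_path Q a \<Longrightarrow> vmult M u (delta a) = delta a \<and> vmult M (delta a) u = delta a"
  using C(10) by blast
lemma ax_v1: "is_path Q a \<Longrightarrow>
       (\<Sum>A\<leftarrow>splits Q 3 a. alpha (A!1) * vmult M (S (A!0)) (delta (A!2)) r) = alpha a * u r"
  using C(11) by blast
lemma ax_v2: "is_path Q a \<Longrightarrow>
       (\<Sum>A\<leftarrow>splits Q 3 a. beta (A!1) * vmult M (delta (A!0)) (S (A!2)) r) = beta a * u r"
  using C(11) by blast
lemma ax_vi: "is_path Q a \<Longrightarrow>
       (\<Sum>A\<leftarrow>splits Q 5 a. phiv Phi (delta (A!0)) (S (A!2)) (delta (A!4)) * beta (A!1) * alpha (A!3)) = eps a"
  using C(12) by blast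
lemma ax_gM: "is_path Q a \<Longrightarrow> is_path Q b \<Longrightarrow> p\<in>supp (M a b) \<Longrightarrow> plen p = plen a + plen b"
  using C(13) by blast
lemma ax_gu: "p\<in>supp u \<Longrightarrow> plen p = 0"
  using C(14) by blast
lemma ax_gS: "is_path Q a \<Longrightarrow> p\<in>supp (S a) \<Longrightarrow> plen p = plen a"
  using C(15) by blast
lemma ax_gPhi: "0 < plen a + plen b + plen c \<Longrightarrow> Phi a b c = 0"
  by (rule C16[rule_format])


lemma M_vv: "M (g,[]) (h,[]) = delta (vmul M g h, [])"
proof -
  let ?x = "M (g,[]) (h,[])"
  have co: "\<forall>l r. comul Q ?x (l,r) = ?x l * ?x r"
    using ax_Mco[of "(g,[])" "(h,[])"] by (simp add: splits2_vertex)
  have ep: "epsv ?x = 1" using ax_Meps[of "(g,[])" "(h,[])"] by (simp add: eps_def plen_def)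
  have fin: "finite (supp ?x)" using ax_M[of "(g,[])" "(h,[])"] by (simp add: kQ_def)
  have deg: "\<forall>p\<in>supp ?x. plen p = 0" using ax_gM[of "(g,[])" "(h,[])"] by (simp add: plen_def)
  obtain x where x: "?x = delta (x,[])" using grouplike[OF fin co ep deg] by blast
  have "vmul M g h = x" unfolding vmul_def using x by (intro the_equality) (auto dest: delta_inj)
  then show ?thesis using x by simp
qed

definition e where "e = one_v u"

lemma u_eq: "u = delta (e, [])"
proof -
  have fin: "finite (supp u)" using ax_u by (simp add: kQ_def)
  obtain x where x: "u = delta (x,[])" using grouplike[OF fin _ ax_ueps] ax_uco ax_gu by blast
  have "one_v u = x" unfolding one_v_def using x by (intro the_equality) (auto dest: delta_inj)
  then have ex: "e = x" unfolding e_def .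
  show ?thesis unfolding ex by (rule x)
qed

definition sv where "sv g = (THE x. S (g,[]) = delta (x,[]))"

lemma S_v: "S (g,[]) = delta (sv g, [])"
proof -
  let ?x = "S (g,[])"
  have co: "\<forall>l r. comul Q ?x (l,r) = ?x l * ?x r"
    using ax_Sco[of "(g,[])"] by (simp add: splits2_vertex)
  have ep: "epsv ?x = 1" using ax_Seps[of "(g,[])"] by (simp add: eps_def plen_def)
  have fin: "finite (supp ?x)" using ax_S[of "(g,[])"] by (simp add: kQ_def)
  have deg: "\<forall>p\<in>supp ?x. plen p = 0" using ax_gS[of "(g,[])"] by (simp add: plen_def)
  obtain x where x: "?x = delta (x,[])" using grouplike[OF fin co ep deg] by blast
  have "sv g = x" unfolding sv_def using x by (intro the_equality) (auto dest: delta_inj)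
  then show ?thesis using x by simp
qed

lemma M_unit_l: "is_path Q a \<Longrightarrow> M (e,[]) a = delta a"
proof -
  assume "is_path Q a"
  then have "vmult M u (delta a) = delta a" using ax_ii by blast
  then have "vmult M (delta (e,[])) (delta a) = delta a" by (subst (asm) u_eq)
  then show ?thesis by (simp add: vmult_delta)
qed
lemma M_unit_r: "is_path Q a \<Longrightarrow> M a (e,[]) = delta a"
proof -
  assume "is_path Q a"
  then have "vmult M (delta a) u = delta a" using ax_ii by blast
  then have "vmult M (delta a) (delta (e,[])) = delta a" by (subst (asm) u_eq)
  then show ?thesis by (simp add: vmult_delta)
qed

lemma unit_l[simp]: "vmul M e g = g"
  using M_unit_l[of "(g,[])"] M_vv[of e g] by (auto dest: delta_inj)
lemma unit_r[simp]: "vmul M g e = g"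
  using M_unit_r[of "(g,[])"] M_vv[of g e] by (auto dest: delta_inj)

lemma Phi_nz: "Phi (a,[]) (b,[]) (c,[]) \<noteq> 0"
proof
  assume "Phi (a,[]) (b,[]) (c,[]) = 0"
  then show False using ax_Phiinv[of "(a,[])" "(b,[])" "(c,[])"] by (simp add: splits2_vertex eps_def plen_def)
qed

lemma vmul_assoc: "vmul M (vmul M a b) c = vmul M a (vmul M b c)"
proof -
  let ?P = "Phi (a,[]) (b,[]) (c,[])"
  have "vmult M (delta (a,[])) (M (b,[]) (c,[])) r * ?P = ?P * vmult M (M (a,[]) (b,[])) (delta (c,[])) r" for r
    using ax_i[of "(a,[])" "(b,[])" "(c,[])" r] by (simp add: splits2_vertex)
  then have "M (a,[]) (vmul M b c,[]) r = M (vmul M a b,[]) (c,[]) r" for r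
    using Phi_nz[of a b c] by (simp add: M_vv vmult_delta)
  then have "delta (vmul M a (vmul M b c),[]) = (delta (vmul M (vmul M a b) c, []) :: ('v,'a,'k) vec)"
    by (simp add: M_vv[symmetric] fun_eq_iff)
  then show ?thesis by (auto dest: delta_inj)
qed

lemma ab_nz: "alpha (g,[]) \<noteq> 0" "beta (g,[]) \<noteq> 0"
  using ax_vi[of "(g,[])"] by (auto simp: splits5_vertex eps_def plen_def)

lemma inv_l: "vmul M (sv g) g = e"
proof -
  have "alpha (g,[]) * vmult M (S (g,[])) (delta (g,[])) r = alpha (g,[]) * u r" for r
    using ax_v1[of "(g,[])" r] by (simp add: splits3_vertex)
  then have "M (sv g,[]) (g,[]) r = u r" for r using ab_nz(1)[of g] by (simp add: S_v vmult_delta)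
  then have "M (sv g,[]) (g,[]) = u" by (simp add: fun_eq_iff)
  then have "delta (vmul M (sv g) g,[]) = (delta (e,[]) :: ('v,'a,'k) vec)"
    by (simp add: M_vv[symmetric]) (subst u_eq, rule refl)
  then show ?thesis by (auto dest: delta_inj)
qed

lemma inv_r: "vmul M g (sv g) = e"
proof -
  have "beta (g,[]) * vmult M (delta (g,[])) (S (g,[])) r = beta (g,[]) * u r" for r
    using ax_v2[of "(g,[])" r] by (simp add: splits3_vertex)
  then have "M (g,[]) (sv g,[]) r = u r" for r using ab_nz(2)[of g] by (simp add: S_v vmult_delta)
  then have "M (g,[]) (sv g,[]) = u" by (simp add: fun_eq_iff)
  then have "delta (vmul M g (sv g),[]) = (delta (e,[]) :: ('v,'a,'k) vec)"
    by (simp add: M_vv[symmetric]) (subst u_eq, rule refl)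
  then show ?thesis by (auto dest: delta_inj)
qed

lemma grp: "group (Vgroup M u)"
  by (rule groupI) (auto simp: Vgroup_def vmul_assoc e_def[symmetric] intro: inv_l)

lemma inv_eq: "inv\<^bsub>Vgroup M u\<^esub> g = sv g"
  using group.inv_equality[OF grp, of "sv g" g] by (simp add: Vgroup_def inv_l e_def)


lemma Phi_arr1: "Phi (h,[a]) y z = 0" by (rule ax_gPhi) (simp add: plen_def)
lemma Phi_arr2: "Phi x (h,[a]) z = 0" by (rule ax_gPhi) (simp add: plen_def)
lemma Phi_arr3: "Phi x y (h,[a]) = 0" by (rule ax_gPhi) (simp add: plen_def)

lemma Earr_E: assumes "p \<in> Earr Q g h"
  obtains a where "a \<in> arr Q" "src Q a = h" "tgt Q a = g" "p = (h,[a])"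
  using assms unfolding Earr_def by blast

lemma M_va:
  assumes a: "a \<in> arr Q"
  shows "M (f,[]) (src Q a,[a]) \<in> arrspan Q (vmul M f (tgt Q a)) (vmul M f (src Q a))"
proof (rule arrowlike)
  have pp: "is_path Q (src Q a,[a])" using a by (rule is_path_arrow)
  show "M (f,[]) (src Q a,[a]) \<in> kQ Q" using ax_M pp by simp
  show "\<forall>l r. comul Q (M (f,[]) (src Q a,[a])) (l,r) =
      M (f,[]) (src Q a,[a]) l * delta (vmul M f (src Q a),[]) r +
      delta (vmul M f (tgt Q a),[]) l * M (f,[]) (src Q a,[a]) r"
    using ax_Mco[of "(f,[])" "(src Q a,[a])"] pp by (simp add: splits2_vertex splits2_arrow M_vv)
  show "\<forall>p\<in>supp (M (f,[]) (src Q a,[a])). plen p = 1"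
    using ax_gM[of "(f,[])" "(src Q a,[a])"] pp by (simp add: plen_def)
qed

lemma M_av:
  assumes a: "a \<in> arr Q"
  shows "M (src Q a,[a]) (f,[]) \<in> arrspan Q (vmul M (tgt Q a) f) (vmul M (src Q a) f)"
proof (rule arrowlike)
  have pp: "is_path Q (src Q a,[a])" using a by (rule is_path_arrow)
  show "M (src Q a,[a]) (f,[]) \<in> kQ Q" using ax_M pp by simp
  show "\<forall>l r. comul Q (M (src Q a,[a]) (f,[])) (l,r) =
      M (src Q a,[a]) (f,[]) l * delta (vmul M (src Q a) f,[]) r +
      delta (vmul M (tgt Q a) f,[]) l * M (src Q a,[a]) (f,[]) r"
    using ax_Mco[of "(src Q a,[a])" "(f,[])"] pp by (simp add: splits2_vertex splits2_arrow M_vv)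
  show "\<forall>p\<in>supp (M (src Q a,[a]) (f,[])). plen p = 1"
    using ax_gM[of "(src Q a,[a])" "(f,[])"] pp by (simp add: plen_def)
qed

lemma M_va': "p \<in> Earr Q g h \<Longrightarrow> M (f,[]) p \<in> Vs (Earr Q (vmul M f g) (vmul M f h))"
  by (erule Earr_E) (metis M_va arrspan_Vs)
lemma M_av': "p \<in> Earr Q g h \<Longrightarrow> M p (f,[]) \<in> Vs (Earr Q (vmul M g f) (vmul M h f))"
  by (erule Earr_E) (metis M_av arrspan_Vs)

lemma lact_into:
  assumes x: "x \<in> Vs (Earr Q g h)"
  shows "lact M f x \<in> Vs (Earr Q (vmul M f g) (vmul M f h))"
proof -
  have "lact M f x = (\<Sum>p\<in>supp x. scal (x p) (lact M f (delta p)))" by (rule linV_repr[OF lin_lact x])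
  also have "\<dots> \<in> Vs (Earr Q (vmul M f g) (vmul M f h))"
  proof (intro Vs_sum Vs_scal)
    fix p assume "p \<in> supp x" then have "p \<in> Earr Q g h" using x by (auto simp: Vs_def)
    then show "lact M f (delta p) \<in> Vs (Earr Q (vmul M f g) (vmul M f h))" unfolding lact_delta by (rule M_va')
  qed
  finally show ?thesis .
qed

lemma ract_into:
  assumes x: "x \<in> Vs (Earr Q g h)"
  shows "ract M x f \<in> Vs (Earr Q (vmul M g f) (vmul M h f))"
proof -
  have "ract M x f = (\<Sum>p\<in>supp x. scal (x p) (ract M (delta p) f))" by (rule linV_repr[OF lin_ract x])
  also have "\<dots> \<in> Vs (Earr Q (vmul M g f) (vmul M h f))"
  proof (intro Vs_sum Vs_scal)
    fix p assume "p \<in> supp x" then have "p \<in> Earr Q g h" using x by (auto simp: Vs_def)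
    then show "ract M (delta p) f \<in> Vs (Earr Q (vmul M g f) (vmul M h f))" unfolding ract_delta by (rule M_av')
  qed
  finally show ?thesis .
qed

lemma lact_unit:
  assumes x: "x \<in> Vs (Earr Q g h)"
  shows "lact M e x = x"
proof -
  have "lact M e x = (\<Sum>p\<in>supp x. scal (x p) (lact M e (delta p)))" by (rule linV_repr[OF lin_lact x])
  also have "\<dots> = (\<Sum>p\<in>supp x. scal (x p) (delta p))"
  proof (intro sum.cong refl)
    fix p assume "p \<in> supp x" then have "p \<in> Earr Q g h" using x by (auto simp: Vs_def)
    then show "scal (x p) (lact M e (delta p)) = scal (x p) (delta p)"
      unfolding lact_delta by (simp add: M_unit_l Earr_path)
  qed
  also have "\<dots> = x" using x Vs_repr[of x] by (simp add: Vs_def)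
  finally show ?thesis .
qed

lemma ract_unit:
  assumes x: "x \<in> Vs (Earr Q g h)"
  shows "ract M x e = x"
proof -
  have "ract M x e = (\<Sum>p\<in>supp x. scal (x p) (ract M (delta p) e))" by (rule linV_repr[OF lin_ract x])
  also have "\<dots> = (\<Sum>p\<in>supp x. scal (x p) (delta p))"
  proof (intro sum.cong refl)
    fix p assume "p \<in> supp x" then have "p \<in> Earr Q g h" using x by (auto simp: Vs_def)
    then show "scal (x p) (ract M (delta p) e) = scal (x p) (delta p)"
      unfolding ract_delta by (simp add: M_unit_r Earr_path)
  qed
  also have "\<dots> = x" using x Vs_repr[of x] by (simp add: Vs_def)
  finally show ?thesis .
qed

lemma solve: "(A::'k) * P = P' * B \<Longrightarrow> P \<noteq> 0 \<Longrightarrow> A = P' / P * B"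
  by (simp add: field_simps)

lemma id1_arrow:
  assumes p: "p \<in> Earr Q g h"
  shows "lact M x (lact M y (delta p)) =
     scal (Phi (x,[]) (y,[]) (g,[]) / Phi (x,[]) (y,[]) (h,[])) (lact M (vmul M x y) (delta p))"
proof -
  obtain a where a: "a \<in> arr Q" "src Q a = h" "tgt Q a = g" and pe: "p = (h,[a])" using p by (rule Earr_E)
  have pp: "is_path Q p" using p by (rule Earr_path)
  have "vmult M (delta (x,[])) (M (y,[]) p) r * Phi (x,[]) (y,[]) (h,[]) =
        Phi (x,[]) (y,[]) (g,[]) * vmult M (M (x,[]) (y,[])) (delta p) r" for r
    using ax_i[of "(x,[])" "(y,[])" p r] pp a unfolding pe by (simp add: splits2_vertex splits2_arrow Phi_arr3)
  then have "lact M x (lact M y (delta p)) r * Phi (x,[]) (y,[]) (h,[]) =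
        Phi (x,[]) (y,[]) (g,[]) * lact M (vmul M x y) (delta p) r" for r
    by (simp add: lact_def vmult_delta M_vv)
  note k = this
  show ?thesis unfolding scal_def by (rule ext, rule solve[OF k Phi_nz])
qed

lemma id2_arrow:
  assumes p: "p \<in> Earr Q g h"
  shows "ract M (ract M (delta p) x) y =
     scal (Phi (h,[]) (x,[]) (y,[]) / Phi (g,[]) (x,[]) (y,[])) (ract M (delta p) (vmul M x y))"
proof -
  obtain a where a: "a \<in> arr Q" "src Q a = h" "tgt Q a = g" and pe: "p = (h,[a])" using p by (rule Earr_E)
  have pp: "is_path Q p" using p by (rule Earr_path)
  have "vmult M (delta p) (M (x,[]) (y,[])) r * Phi (h,[]) (x,[]) (y,[]) =
        Phi (g,[]) (x,[]) (y,[]) * vmult M (M p (x,[])) (delta (y,[])) r" for r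
    using ax_i[of p "(x,[])" "(y,[])" r] pp a unfolding pe by (simp add: splits2_vertex splits2_arrow Phi_arr1)
  then have "ract M (ract M (delta p) x) y r * Phi (g,[]) (x,[]) (y,[]) =
        Phi (h,[]) (x,[]) (y,[]) * ract M (delta p) (vmul M x y) r" for r
    by (simp add: ract_def vmult_delta M_vv mult.commute)
  note k = this
  show ?thesis unfolding scal_def by (rule ext, rule solve[OF k Phi_nz])
qed

lemma id3_arrow:
  assumes p: "p \<in> Earr Q g h"
  shows "ract M (lact M x (delta p)) y =
     scal (Phi (x,[]) (h,[]) (y,[]) / Phi (x,[]) (g,[]) (y,[])) (lact M x (ract M (delta p) y))"
proof -
  obtain a where a: "a \<in> arr Q" "src Q a = h" "tgt Q a = g" and pe: "p = (h,[a])" using p by (rule Earr_E)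
  have pp: "is_path Q p" using p by (rule Earr_path)
  have "vmult M (delta (x,[])) (M p (y,[])) r * Phi (x,[]) (h,[]) (y,[]) =
        Phi (x,[]) (g,[]) (y,[]) * vmult M (M (x,[]) p) (delta (y,[])) r" for r
    using ax_i[of "(x,[])" p "(y,[])" r] pp a unfolding pe by (simp add: splits2_vertex splits2_arrow Phi_arr2)
  then have "ract M (lact M x (delta p)) y r * Phi (x,[]) (g,[]) (y,[]) =
        Phi (x,[]) (h,[]) (y,[]) * lact M x (ract M (delta p) y) r" for r
    by (simp add: ract_def lact_def vmult_delta M_vv mult.commute)
  note k = this
  show ?thesis unfolding scal_def by (rule ext, rule solve[OF k Phi_nz])
qed


lemma lact_scal: "finite (supp z) \<Longrightarrow> lact M f (scal c z) = scal c (lact M f z)"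
  using lin_lact[of M f UNIV] by (simp add: linV_def Vs_def)
lemma ract_scal: "finite (supp z) \<Longrightarrow> ract M (scal c z) f = scal c (ract M z f)"
  using lin_ract[of M f UNIV] by (simp add: linV_def Vs_def)

lemma scal_inv: "c \<noteq> 0 \<Longrightarrow> scal (1/c) (scal c y) = (y :: ('v,'a,'k) vec)"
  by (simp add: scal_scal)

lemma id1:
  assumes m: "m \<in> Vs (Earr Q g h)"
  shows "lact M x (lact M y m) =
     scal (Phi (x,[]) (y,[]) (g,[]) / Phi (x,[]) (y,[]) (h,[])) (lact M (vmul M x y) m)"
proof -
  have l1: "linV (\<lambda>m. lact M x (lact M y m)) (Earr Q g h)"
    using lact_into Vs_mono[of _ UNIV] by (intro linV_comp[OF lin_lact lin_lact]) blast
  have ag: "\<forall>p\<in>Earr Q g h. lact M x (lact M y (delta p)) =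
     scal (Phi (x,[]) (y,[]) (g,[]) / Phi (x,[]) (y,[]) (h,[])) (lact M (vmul M x y) (delta p))"
    using id1_arrow by blast
  show ?thesis using linV_agree[OF l1 lin_lact ag m] by simp
qed

lemma id2:
  assumes m: "m \<in> Vs (Earr Q g h)"
  shows "ract M (ract M m x) y =
     scal (Phi (h,[]) (x,[]) (y,[]) / Phi (g,[]) (x,[]) (y,[])) (ract M m (vmul M x y))"
proof -
  have l1: "linV (\<lambda>m. ract M (ract M m x) y) (Earr Q g h)"
    using ract_into Vs_mono[of _ UNIV] by (intro linV_comp[OF lin_ract lin_ract]) blast
  have ag: "\<forall>p\<in>Earr Q g h. ract M (ract M (delta p) x) y =
     scal (Phi (h,[]) (x,[]) (y,[]) / Phi (g,[]) (x,[]) (y,[])) (ract M (delta p) (vmul M x y))"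
    using id2_arrow by blast
  show ?thesis using linV_agree[OF l1 lin_ract ag m] by simp
qed

lemma id3:
  assumes m: "m \<in> Vs (Earr Q g h)"
  shows "ract M (lact M x m) y =
     scal (Phi (x,[]) (h,[]) (y,[]) / Phi (x,[]) (g,[]) (y,[])) (lact M x (ract M m y))"
proof -
  have l1: "linV (\<lambda>m. ract M (lact M x m) y) (Earr Q g h)"
    using lact_into Vs_mono[of _ UNIV] by (intro linV_comp[OF lin_ract lin_lact]) blast
  have l2: "linV (\<lambda>m. lact M x (ract M m y)) (Earr Q g h)"
    using ract_into Vs_mono[of _ UNIV] by (intro linV_comp[OF lin_lact lin_ract]) blast
  have ag: "\<forall>p\<in>Earr Q g h. ract M (lact M x (delta p)) y =
     scal (Phi (x,[]) (h,[]) (y,[]) / Phi (x,[]) (g,[]) (y,[])) (lact M x (ract M (delta p) y))"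
    using id3_arrow by blast
  show ?thesis using linV_agree[OF l1 l2 ag m] by simp
qed

lemma Vs_fin: "z \<in> Vs E \<Longrightarrow> finite (supp z)" by (simp add: Vs_def)

lemma lact_img: "lact M f ` Vs (Earr Q g h) = Vs (Earr Q (vmul M f g) (vmul M f h))"
proof
  show "lact M f ` Vs (Earr Q g h) \<subseteq> Vs (Earr Q (vmul M f g) (vmul M f h))" using lact_into by blast
  show "Vs (Earr Q (vmul M f g) (vmul M f h)) \<subseteq> lact M f ` Vs (Earr Q g h)"
  proof
    fix y :: "('v,'a,'k) vec" assume y: "y \<in> Vs (Earr Q (vmul M f g) (vmul M f h))"
    let ?c = "Phi (f,[]) (sv f,[]) (vmul M f g,[]) / Phi (f,[]) (sv f,[]) (vmul M f h,[])"
    have c: "?c \<noteq> 0" using Phi_nz by simp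
    have "lact M f (lact M (sv f) y) = scal ?c (lact M (vmul M f (sv f)) y)" by (rule id1[OF y])
    also have "\<dots> = scal ?c y" using lact_unit[OF y] by (simp add: inv_r)
    finally have k: "lact M f (lact M (sv f) y) = scal ?c y" .
    have ly: "lact M (sv f) y \<in> Vs (Earr Q g h)"
      using lact_into[OF y, of "sv f"] by (simp add: vmul_assoc[symmetric] inv_l)
    define m where "m = scal (1/?c) (lact M (sv f) y)"
    have mV: "m \<in> Vs (Earr Q g h)" unfolding m_def using ly by (rule Vs_scal)
    have "lact M f m = scal (1/?c) (lact M f (lact M (sv f) y))" unfolding m_def by (rule lact_scal[OF Vs_fin[OF ly]])
    also have "\<dots> = scal (1/?c) (scal ?c y)" by (simp only: k)
    also have "\<dots> = y" by (rule scal_inv[OF c])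
    finally have "lact M f m = y" .
    then show "y \<in> lact M f ` Vs (Earr Q g h)" using mV by blast
  qed
qed

lemma ract_img: "(\<lambda>m. ract M m f) ` Vs (Earr Q g h) = Vs (Earr Q (vmul M g f) (vmul M h f))"
proof
  show "(\<lambda>m. ract M m f) ` Vs (Earr Q g h) \<subseteq> Vs (Earr Q (vmul M g f) (vmul M h f))" using ract_into by blast
  show "Vs (Earr Q (vmul M g f) (vmul M h f)) \<subseteq> (\<lambda>m. ract M m f) ` Vs (Earr Q g h)"
  proof
    fix y :: "('v,'a,'k) vec" assume y: "y \<in> Vs (Earr Q (vmul M g f) (vmul M h f))"
    let ?c = "Phi (vmul M h f,[]) (sv f,[]) (f,[]) / Phi (vmul M g f,[]) (sv f,[]) (f,[])"
    have c: "?c \<noteq> 0" using Phi_nz by simp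
    have "ract M (ract M y (sv f)) f = scal ?c (ract M y (vmul M (sv f) f))" by (rule id2[OF y])
    also have "\<dots> = scal ?c y" using ract_unit[OF y] by (simp add: inv_l)
    finally have k: "ract M (ract M y (sv f)) f = scal ?c y" .
    have ly: "ract M y (sv f) \<in> Vs (Earr Q g h)"
      using ract_into[OF y, of "sv f"] by (simp add: vmul_assoc inv_r)
    define m where "m = scal (1/?c) (ract M y (sv f))"
    have mV: "m \<in> Vs (Earr Q g h)" unfolding m_def using ly by (rule Vs_scal)
    have "ract M m f = scal (1/?c) (ract M (ract M y (sv f)) f)" unfolding m_def by (rule ract_scal[OF Vs_fin[OF ly]])
    also have "\<dots> = scal (1/?c) (scal ?c y)" by (simp only: k)
    also have "\<dots> = y" by (rule scal_inv[OF c])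
    finally have "ract M m f = y" .
    then show "y \<in> (\<lambda>m. ract M m f) ` Vs (Earr Q g h)" using mV by blast
  qed
qed

lemma lact_inj: "inj_on (lact M f) (Vs (Earr Q g h))"
proof (rule inj_onI)
  fix m1 m2 :: "('v,'a,'k) vec" assume m1: "m1 \<in> Vs (Earr Q g h)" and m2: "m2 \<in> Vs (Earr Q g h)"
    and eq: "lact M f m1 = lact M f m2"
  let ?c = "Phi (sv f,[]) (f,[]) (g,[]) / Phi (sv f,[]) (f,[]) (h,[])"
  have c: "?c \<noteq> 0" using Phi_nz by simp
  have "lact M (sv f) (lact M f m1) = scal ?c m1" using id1[OF m1, of "sv f" f] lact_unit[OF m1] by (simp add: inv_l)
  moreover have "lact M (sv f) (lact M f m2) = scal ?c m2" using id1[OF m2, of "sv f" f] lact_unit[OF m2] by (simp add: inv_l)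
  ultimately show "m1 = m2" using eq c scal_cancel by metis
qed

lemma ract_inj: "inj_on (\<lambda>m. ract M m f) (Vs (Earr Q g h))"
proof (rule inj_onI)
  fix m1 m2 :: "('v,'a,'k) vec" assume m1: "m1 \<in> Vs (Earr Q g h)" and m2: "m2 \<in> Vs (Earr Q g h)"
    and eq: "ract M m1 f = ract M m2 f"
  let ?c = "Phi (h,[]) (f,[]) (sv f,[]) / Phi (g,[]) (f,[]) (sv f,[])"
  have c: "?c \<noteq> 0" using Phi_nz by simp
  have "ract M (ract M m1 f) (sv f) = scal ?c m1" using id2[OF m1, of f "sv f"] ract_unit[OF m1] by (simp add: inv_r)
  moreover have "ract M (ract M m2 f) (sv f) = scal ?c m2" using id2[OF m2, of f "sv f"] ract_unit[OF m2] by (simp add: inv_r)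
  ultimately show "m1 = m2" using eq c scal_cancel by metis
qed

lemma lact_bij: "bij_betw (lact M f) (arrspan Q g h) (arrspan Q (vmul M f g) (vmul M f h))"
  unfolding arrspan_Vs bij_betw_def using lact_inj lact_img by blast
lemma ract_bij: "bij_betw (\<lambda>m. ract M m f) (arrspan Q g h) (arrspan Q (vmul M g f) (vmul M h f))"
  unfolding arrspan_Vs bij_betw_def using ract_inj ract_img by blast

lemma count:
  "\<exists>\<phi>. bij_betw \<phi> (arrows_between Q x (vmul M (vmul M (vmul M (sv g) c) g) x)) (arrows_between Q e c)"
proof -
  obtain \<phi>1 where p1: "bij_betw \<phi>1 (arrows_between Q e c) (arrows_between Q (vmul M (sv g) e) (vmul M (sv g) c))"
    using arr_bij[OF lact_bij[of "sv g" c e] lin_lact] by blast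
  obtain \<phi>2 where p2: "bij_betw \<phi>2 (arrows_between Q (sv g) (vmul M (sv g) c))
      (arrows_between Q (vmul M (sv g) g) (vmul M (vmul M (sv g) c) g))"
    using arr_bij[OF ract_bij[of g "vmul M (sv g) c" "sv g"] lin_ract] by blast
  obtain \<phi>3 where p3: "bij_betw \<phi>3 (arrows_between Q e (vmul M (vmul M (sv g) c) g))
      (arrows_between Q (vmul M e x) (vmul M (vmul M (vmul M (sv g) c) g) x))"
    using arr_bij[OF ract_bij[of x "vmul M (vmul M (sv g) c) g" e] lin_ract] by blast
  have "bij_betw (\<phi>3 \<circ> (\<phi>2 \<circ> \<phi>1)) (arrows_between Q e c) (arrows_between Q x (vmul M (vmul M (vmul M (sv g) c) g) x))"
    using p1 p2 p3 by (simp add: inv_l) (intro bij_betw_trans; assumption)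
  then show ?thesis using bij_betw_inv_into by blast
qed

lemma main:
  "(\<forall>g h. \<exists>x. M (g, []) (h, []) = delta (x, [])) \<and>
    group (Vgroup M u) \<and>
    u = delta (one_v u, []) \<and>
    (\<forall>g. S (g, []) = delta (inv\<^bsub>Vgroup M u\<^esub> g, [])) \<and>
    (\<forall>f g h. lact M f ` arrspan Q g h = arrspan Q (vmul M f g) (vmul M f h)) \<and>
    (\<forall>f g h. (\<lambda>m. ract M m f) ` arrspan Q g h = arrspan Q (vmul M g f) (vmul M h f)) \<and>
    (\<forall>e' f g h m. m \<in> arrspan Q g h \<longrightarrow>
       lact M e' (lact M f m) =
         scal (Phi (e',[]) (f,[]) (g,[]) / Phi (e',[]) (f,[]) (h,[])) (lact M (vmul M e' f) m) \<and>
       ract M (ract M m e') f =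
         scal (Phi (h,[]) (e',[]) (f,[]) / Phi (g,[]) (e',[]) (f,[])) (ract M m (vmul M e' f)) \<and>
       ract M (lact M e' m) f =
         scal (Phi (e',[]) (h,[]) (f,[]) / Phi (e',[]) (g,[]) (f,[])) (lact M e' (ract M m f))) \<and>
    (\<forall>x g c. \<exists>\<phi>. bij_betw \<phi>
       (arrows_between Q x
          (vmul M (vmul M (vmul M (inv\<^bsub>Vgroup M u\<^esub> g) c) g) x))
       (arrows_between Q (one_v u) c))"
proof (intro conjI allI impI)
  fix g h show "\<exists>x. M (g, []) (h, []) = delta (x, [])" using M_vv by blast
next
  show "group (Vgroup M u)" by (rule grp)
next
  show "u = delta (one_v u, [])" using u_eq unfolding e_def .
next
  fix g show "S (g, []) = delta (inv\<^bsub>Vgroup M u\<^esub> g, [])" by (simp add: inv_eq S_v)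
next
  fix f g h show "lact M f ` arrspan Q g h = arrspan Q (vmul M f g) (vmul M f h)"
    unfolding arrspan_Vs by (rule lact_img)
next
  fix f g h show "(\<lambda>m. ract M m f) ` arrspan Q g h = arrspan Q (vmul M g f) (vmul M h f)"
    unfolding arrspan_Vs by (rule ract_img)
next
  fix e' f g h and m :: "('v,'a,'k) vec" assume "m \<in> arrspan Q g h"
  then have m: "m \<in> Vs (Earr Q g h)" unfolding arrspan_Vs .
  show "lact M e' (lact M f m) =
         scal (Phi (e',[]) (f,[]) (g,[]) / Phi (e',[]) (f,[]) (h,[])) (lact M (vmul M e' f) m)"
    by (rule id1[OF m])
  show "ract M (ract M m e') f =
         scal (Phi (h,[]) (e',[]) (f,[]) / Phi (g,[]) (e',[]) (f,[])) (ract M m (vmul M e' f))"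
    by (rule id2[OF m])
  show "ract M (lact M e' m) f =
         scal (Phi (e',[]) (h,[]) (f,[]) / Phi (e',[]) (g,[]) (f,[])) (lact M e' (ract M m f))"
    by (rule id3[OF m])
next
  fix x g c
  show "\<exists>\<phi>. bij_betw \<phi> (arrows_between Q x (vmul M (vmul M (vmul M (inv\<^bsub>Vgroup M u\<^esub> g) c) g) x))
       (arrows_between Q (one_v u) c)"
    using count[of x g c] unfolding inv_eq e_def .
qed

end

theorem mainTheorem2:
  fixes Q :: "('v,'a) quiver"
    and M :: "('v,'a) path \<Rightarrow> ('v,'a) path \<Rightarrow> ('v,'a,'k::field) vec"
    and u :: "('v,'a,'k) vec"
    and Phi Phiinv :: "('v,'a) path \<Rightarrow> ('v,'a) path \<Rightarrow> ('v,'a) path \<Rightarrow> 'k"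
    and S :: "('v,'a) path \<Rightarrow> ('v,'a,'k) vec"
    and alpha beta :: "('v,'a) path \<Rightarrow> 'k"
  assumes "graded_majid Q M u Phi Phiinv S alpha beta"
  shows "(\<forall>g h. \<exists>x. M (g, []) (h, []) = delta (x, [])) \<and>
    group (Vgroup M u) \<and>
    u = delta (one_v u, []) \<and>
    (\<forall>g. S (g, []) = delta (inv\<^bsub>Vgroup M u\<^esub> g, [])) \<and>
    (\<forall>f g h. lact M f ` arrspan Q g h = arrspan Q (vmul M f g) (vmul M f h)) \<and>
    (\<forall>f g h. (\<lambda>m. ract M m f) ` arrspan Q g h = arrspan Q (vmul M g f) (vmul M h f)) \<and>
    (\<forall>e f g h m. m \<in> arrspan Q g h \<longrightarrow>
       lact M e (lact M f m) =
         scal (Phi (e,[]) (f,[]) (g,[]) / Phi (e,[]) (f,[]) (h,[])) (lact M (vmul M e f) m) \<and>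
       ract M (ract M m e) f =
         scal (Phi (h,[]) (e,[]) (f,[]) / Phi (g,[]) (e,[]) (f,[])) (ract M m (vmul M e f)) \<and>
       ract M (lact M e m) f =
         scal (Phi (e,[]) (h,[]) (f,[]) / Phi (e,[]) (g,[]) (f,[])) (lact M e (ract M m f))) \<and>
    (\<forall>x g c. \<exists>\<phi>. bij_betw \<phi>
       (arrows_between Q x
          (vmul M (vmul M (vmul M (inv\<^bsub>Vgroup M u\<^esub> g) c) g) x))
       (arrows_between Q (one_v u) c))"
  using gm.main[OF gm.intro[OF assms]] .

end
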